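(* Let $n\in\mathbb{N}$. For every $\mathbf{p}=(\mathbf{p}_0,\dots,\mathbf{p}_{n-1})\in\mathbb{F}_2^{n}$, the $\mu_n$-measure of the set $\{r\in Q_n: p(r)_k=\mathbf{p}_k \text{ for all } 0\le k<n\}$ equals $2^{-n}$.
   Context: $\mathbb{F}_2((x^{-1}))$ is the field of formal series $r=\sum_{z\in\mathbb{Z}}a_zx^z$, $a_z\in\mathbb{F}_2$, with $a_z\ne0$ for only finitely many positive $z$; $\deg(r)=\max\{z:a_z\ne0\}$. The polynomial part is $[r]=\sum_{z\ge0}a_zx^z$. $S(r)=\frac{r}{x+1}$ if $[r](1)=0$ and $S(r)=\frac{xr}{x+1}$ if $[r](1)=1$; $p(r)_k=[S^k(r)](1)$. $Q_n=\{r:\deg(r)=n\}$ and $\mu_n$ is the probability measure on $Q_n$ under which the coefficients $a_{n-1},a_{n-2},\dots$ are independent and uniform in $\mathbb{F}_2$. *)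

theory Defs
  imports "HOL-Probability.Probability" "HOL-Library.Z2"
    "HOL-Computational_Algebra.Formal_Laurent_Series"
begin

text \<open>F_2((x^{-1})) is modelled as \<open>bit fls\<close> (Laurent series in X = x^{-1} over F_2,
  finitely many negative powers of X = finitely many positive powers of x).
  The coefficient a_z of x^z of r is \<open>fls_nth r (-z)\<close>; deg r = - fls_subdegree r.\<close>

definition xvar :: "bit fls" where
  "xvar = fls_X_inv"

definition deg2 :: "bit fls \<Rightarrow> int" where
  "deg2 r = - fls_subdegree r"

definition polypart_at1 :: "bit fls \<Rightarrow> bit" where
  "polypart_at1 r = (\<Sum>z\<in>{0..deg2 r}. fls_nth r (-z))"

definition Smap :: "bit fls \<Rightarrow> bit fls" where
  "Smap r = (if polypart_at1 r = 0 then r / (xvar + 1) else (xvar * r) / (xvar + 1))"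

definition pseq :: "bit fls \<Rightarrow> nat \<Rightarrow> bit" where
  "pseq r k = polypart_at1 ((Smap ^^ k) r)"

text \<open>Q_n = series of degree n. A sample of mu_n is described by the sequence of
  coefficients w j = a_{n-1-j} (j = 0,1,2,...); the series is
  x^n + sum_j w j x^{n-1-j}.\<close>
definition series_of :: "nat \<Rightarrow> (nat \<Rightarrow> bool) \<Rightarrow> bit fls" where
  "series_of n w = fls_shift (int n)
     (fps_to_fls (Abs_fps (\<lambda>i. if i = 0 then 1 else (if w (i - 1) then 1 else 0))))"

text \<open>The coefficient space: i.i.d. uniform bits; mu_n is the law of series_of n.\<close>
definition coin_space :: "(nat \<Rightarrow> bool) measure" where
  "coin_space = PiM UNIV (\<lambda>_::nat. measure_pmf (pmf_of_set (UNIV :: bool set)))"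

end

theory Submission
  imports Defs
begin
unbundle fps_syntax
declare add_bit_eq_xor[simp del] mult_bit_eq_and[simp del]

lemma bit_add_self[simp]: "(a::bit) + a = 0"
  by (cases a) simp_all

lemma bit_solve: "(a::bit) = b + c \<Longrightarrow> c = a + b"
  by (cases a; cases b; cases c) simp_all

lemma G:
  fixes q p c :: "nat \<Rightarrow> bit"
  assumes rec: "\<And>i. q (Suc i) = q i + p i"
  shows "(\<forall>i<j. p i = c i) \<longleftrightarrow> (\<forall>i\<le>j. q i = q 0 + (\<Sum>l<i. c l))"
proof
  assume H: "\<forall>i<j. p i = c i"
  show "\<forall>i\<le>j. q i = q 0 + (\<Sum>l<i. c l)"
  proof (intro allI impI)
    fix i assume "i \<le> j" then show "q i = q 0 + (\<Sum>l<i. c l)"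
    proof (induction i)
      case 0 then show ?case by simp
    next
      case (Suc i)
      have si: "i \<le> j" "i < j" using Suc.prems by simp_all
      have "q i = q 0 + (\<Sum>l<i. c l)" using Suc.IH[OF si(1)] .
      moreover have "p i = c i" using H si(2) by blast
      ultimately show ?case by (simp only: rec sum.lessThan_Suc add.assoc)
    qed
  qed
next
  assume H: "\<forall>i\<le>j. q i = q 0 + (\<Sum>l<i. c l)"
  show "\<forall>i<j. p i = c i"
  proof (intro allI impI)
    fix i assume i: "i < j"
    have h1: "q (Suc i) = q 0 + (\<Sum>l<Suc i. c l)" using H i Suc_leI by blast
    have h2: "q i = q 0 + (\<Sum>l<i. c l)" using H i less_imp_le by blast
    have "q 0 + (\<Sum>l<i. c l) + c i = q 0 + (\<Sum>l<i. c l) + p i"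
      using h1 h2 rec[of i] by (simp only: sum.lessThan_Suc add.assoc)
    then show "p i = c i" by simp
  qed
qed

definition Tp :: "bit poly \<Rightarrow> bit poly" where
  "Tp P = (if poly P 1 = 0 then P div [:1,1:] else pCons 1 P div [:1,1:])"

lemma dvd11: "poly P (1::bit) = 0 \<Longrightarrow> [:1,1:] dvd P"
  using poly_eq_0_iff_dvd[of P 1] by simp

lemma mult11: "[:1,1:] * (Q::bit poly) = Q + pCons 0 Q"
  by simp

declare mult_pCons_left[simp del] mult_pCons_right[simp del]

lemma Tp_eq: "[:1,1:] * Tp P = (if poly P 1 = 0 then P else pCons 1 P)"
proof (cases "poly P 1 = 0")
  case True then show ?thesis unfolding Tp_def using dvd11[of P]
    by simp
next
  case False
  then have "poly (pCons 1 P) 1 = 0" by simp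
  then show ?thesis unfolding Tp_def using dvd11[of "pCons 1 P"] False
    by simp
qed

lemma coeff_11_0[simp]: "coeff ([:1,1:]*Q) 0 = coeff (Q::bit poly) 0"
  unfolding mult11 by (simp only: coeff_add coeff_pCons_0 add_0_right)
lemma coeff_11_Suc[simp]: "coeff ([:1,1:]*Q) (Suc i) = coeff Q (Suc i) + coeff (Q::bit poly) i"
  unfolding mult11 by (simp only: coeff_add coeff_pCons_Suc)

lemma Tp_0: "poly P 1 = 0 \<Longrightarrow> P = [:1,1:] * Tp P"
  using Tp_eq[of P] by simp
lemma Tp_1: "poly P 1 \<noteq> 0 \<Longrightarrow> pCons 1 P = [:1,1:] * Tp P"
  using Tp_eq[of P] by simp

lemma Tp_mult: "Tp ([:1,1:] * Q) = Q"
proof -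
  have "poly ([:1,1:] * Q) 1 = 0" by simp
  then have "[:1,1:] * Tp ([:1,1:] * Q) = [:1,1:] * Q" using Tp_eq by simp
  then show ?thesis by simp
qed

lemma degree_11: "Q \<noteq> 0 \<Longrightarrow> degree ([:1,1:] * (Q::bit poly)) = Suc (degree Q)"
  by (subst degree_mult_eq) auto

definition D :: "bit poly \<Rightarrow> nat \<Rightarrow> bool" where
  "D P d \<longleftrightarrow> degree P = d \<and> coeff P d = 1"

lemma D_nz: "D P d \<Longrightarrow> P \<noteq> 0"
  unfolding D_def by auto

lemma ex1_transfer:
  assumes a: "\<And>P. A P \<Longrightarrow> B (h P)"
    and b: "\<And>P P'. A P \<Longrightarrow> A P' \<Longrightarrow> h P = h P' \<Longrightarrow> P = P'"
    and c: "\<And>Q. B Q \<Longrightarrow> \<exists>P. A P \<and> h P = Q"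
    and u: "\<exists>!Q. B Q"
  shows "\<exists>!P. A P"
proof -
  obtain Q where Q: "B Q" using u by blast
  obtain P where P: "A P" using c[OF Q] by blast
  show ?thesis
  proof (rule ex1I[of _ P])
    show "A P" by (rule P)
    fix P' assume "A P'"
    then have "h P' = h P" using a P u by blast
    then show "P' = P" using b P \<open>A P'\<close> by metis
  qed
qed

lemma base_unique: "\<exists>!P. D P j \<and> (\<forall>i<j. coeff P i = c i)"
proof -
  define W where "W = monom (1::bit) j + (\<Sum>l<j. monom (c l) l)"
  have cW: "coeff W i = (if i = j then 1 else if i < j then c i else 0)" for i
    unfolding W_def by (auto simp: coeff_sum coeff_monom)
  have "degree W \<le> j" by (rule degree_le) (auto simp: cW)
  moreover have "j \<le> degree W" by (rule le_degree) (simp add: cW)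
  ultimately have DW: "D W j" unfolding D_def by (simp add: cW)
  show ?thesis
  proof (rule ex1I[of _ W])
    show "D W j \<and> (\<forall>i<j. coeff W i = c i)" using DW by (simp add: cW)
    fix P assume H: "D P j \<and> (\<forall>i<j. coeff P i = c i)"
    show "P = W"
    proof (rule poly_eqI)
      fix i
      show "coeff P i = coeff W i"
      proof (cases "i < j")
        case True then show ?thesis using H by (simp add: cW)
      next
        case False
        then show ?thesis using H unfolding D_def
          by (cases "i = j") (auto simp: cW coeff_eq_0)
      qed
    qed
  qed
qed


lemma bit3: "b + (a + b) = (a::bit)"
  by (cases a; cases b) simp_all

lemma iter_split:
  "(\<forall>k<Suc m. poly ((Tp^^k) P) 1 = pp k) \<longleftrightarrow>
   poly P 1 = pp 0 \<and> (\<forall>k<m. poly ((Tp^^k) (Tp P)) 1 = pp (Suc k))"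
proof -
  have e: "(Tp^^Suc k) P = (Tp^^k) (Tp P)" for k by (simp add: funpow_Suc_right del: funpow.simps)
  show ?thesis
  proof
    assume H: "\<forall>k<Suc m. poly ((Tp^^k) P) 1 = pp k"
    show "poly P 1 = pp 0 \<and> (\<forall>k<m. poly ((Tp^^k) (Tp P)) 1 = pp (Suc k))"
    proof (intro conjI allI impI)
      show "poly P 1 = pp 0" using H[rule_format, of 0] by simp
      fix k assume "k < m"
      then show "poly ((Tp^^k) (Tp P)) 1 = pp (Suc k)" using H[rule_format, of "Suc k"] e[of k] by simp
    qed
  next
    assume H: "poly P 1 = pp 0 \<and> (\<forall>k<m. poly ((Tp^^k) (Tp P)) 1 = pp (Suc k))"
    show "\<forall>k<Suc m. poly ((Tp^^k) P) 1 = pp k"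
    proof (intro allI impI)
      fix k assume k: "k < Suc m"
      show "poly ((Tp^^k) P) 1 = pp k"
      proof (cases k)
        case 0 then show ?thesis using H by simp
      next
        case (Suc k') then show ?thesis using H k e[of k'] by simp
      qed
    qed
  qed
qed

lemma cons0:
  fixes Q :: "bit poly"
  shows "(\<forall>i<j. coeff ([:1,1:]*Q) i = c i) \<longleftrightarrow> (\<forall>i<j. coeff Q i = (\<Sum>l<Suc i. c l))"
proof -
  define q where "q i = (if i = 0 then 0 else coeff Q (i - 1))" for i
  have rec: "q (Suc i) = q i + coeff ([:1,1:]*Q) i" for i
  proof (cases i)
    case 0 then show ?thesis by (simp add: q_def)
  next
    case (Suc i') then show ?thesis by (simp add: q_def bit3)
  qed
  have "(\<forall>i<j. coeff ([:1,1:]*Q) i = c i) \<longleftrightarrow> (\<forall>i\<le>j. q i = q 0 + (\<Sum>l<i. c l))"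
    by (rule G[of q "\<lambda>i. coeff ([:1,1:]*Q) i" j c, OF rec])
  also have "\<dots> \<longleftrightarrow> (\<forall>i<j. coeff Q i = (\<Sum>l<Suc i. c l))"
  proof
    assume H: "\<forall>i\<le>j. q i = q 0 + (\<Sum>l<i. c l)"
    show "\<forall>i<j. coeff Q i = (\<Sum>l<Suc i. c l)"
    proof (intro allI impI)
      fix i assume "i < j"
      then have "q (Suc i) = q 0 + (\<Sum>l<Suc i. c l)" using H Suc_leI by blast
      then show "coeff Q i = (\<Sum>l<Suc i. c l)" by (simp add: q_def)
    qed
  next
    assume H: "\<forall>i<j. coeff Q i = (\<Sum>l<Suc i. c l)"
    show "\<forall>i\<le>j. q i = q 0 + (\<Sum>l<i. c l)"
    proof (intro allI impI)
      fix i assume i: "i \<le> j"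
      show "q i = q 0 + (\<Sum>l<i. c l)"
      proof (cases i)
        case 0 then show ?thesis by (simp add: q_def)
      next
        case (Suc i') then have "i' < j" using i by simp
        then show ?thesis using H Suc by (simp add: q_def)
      qed
    qed
  qed
  finally show ?thesis .
qed

lemma cons1:
  fixes Q P :: "bit poly"
  assumes eq: "[:1,1:]*Q = pCons 1 P"
  shows "(\<forall>i<j. coeff P i = c i) \<longleftrightarrow> (\<forall>i<Suc j. coeff Q i = 1 + (\<Sum>l<i. c l))"
proof -
  have rec: "coeff Q (Suc i) = coeff Q i + coeff P i" for i
  proof -
    have "coeff Q (Suc i) + coeff Q i = coeff P i"
      using arg_cong[OF eq, of "\<lambda>R. coeff R (Suc i)"] by simp
    then show ?thesis by (metis bit3 add.commute)
  qed
  have q0: "coeff Q 0 = 1" using arg_cong[OF eq, of "\<lambda>R. coeff R 0"] by simp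
  have "(\<forall>i<j. coeff P i = c i) \<longleftrightarrow> (\<forall>i\<le>j. coeff Q i = coeff Q 0 + (\<Sum>l<i. c l))"
    by (rule G[of "\<lambda>i. coeff Q i" "\<lambda>i. coeff P i" j c, OF rec])
  then show ?thesis using q0 by (simp add: less_Suc_eq_le)
qed

lemma main_unique:
  "\<exists>!P. D P (j+m) \<and> (\<forall>i<j. coeff P i = c i) \<and> (\<forall>k<m. poly ((Tp^^k) P) 1 = pp k)"
proof (induction m arbitrary: j c pp)
  case 0
  then show ?case using base_unique[of j c] by simp
next
  case (Suc m)
  show ?case
  proof (cases "pp 0 = 0")
    case True
    define c' where "c' i = (\<Sum>l<Suc i. c l)" for i
    note IH = Suc.IH[of j c' "\<lambda>k. pp (Suc k)"]
    show ?thesis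
    proof (rule ex1_transfer[OF _ _ _ IH, where h = Tp])
      fix P assume A: "D P (j + Suc m) \<and> (\<forall>i<j. coeff P i = c i) \<and> (\<forall>k<Suc m. poly ((Tp ^^ k) P) 1 = pp k)"
      then have "poly P 1 = pp 0 \<and> (\<forall>k<m. poly ((Tp^^k) (Tp P)) 1 = pp (Suc k))"
        using iter_split[of m P pp] by blast
      then have p1: "poly P 1 = 0" and it0: "\<forall>k<m. poly ((Tp^^k) (Tp P)) 1 = pp (Suc k)"
        using True by auto
      obtain Q where Qd: "Q = Tp P" by blast
      have it: "\<forall>k<m. poly ((Tp^^k) Q) 1 = pp (Suc k)" using it0 Qd by blast
      have PQ: "P = [:1,1:] * Q" using Tp_0[OF p1] Qd by blast
      have "P \<noteq> 0" using A D_nz by blast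
      then have Qnz: "Q \<noteq> 0" using PQ by auto
      have "degree P = Suc (j + m)" using A unfolding D_def by simp
      then have dQ: "degree Q = j + m" using degree_11[OF Qnz] PQ by simp
      have "coeff P (Suc (j+m)) = 1" using A unfolding D_def by simp
      then have "coeff Q (Suc (j+m)) + coeff Q (j+m) = 1"
        using PQ coeff_11_Suc[of Q "j+m"] by simp
      then have "coeff Q (j+m) = 1" using dQ by (simp add: coeff_eq_0)
      then have DQ: "D Q (j+m)" unfolding D_def using dQ by simp
      have "\<forall>i<j. coeff P i = c i" using A by blast
      then have "\<forall>i<j. coeff Q i = c' i"
        using cons0[of j Q c] PQ unfolding c'_def by simp
      then show "D (Tp P) (j + m) \<and> (\<forall>i<j. coeff (Tp P) i = c' i) \<and> (\<forall>k<m. poly ((Tp ^^ k) (Tp P)) 1 = pp (Suc k))"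
        using DQ it Qd by blast
    next
      fix P P' assume A: "D P (j + Suc m) \<and> (\<forall>i<j. coeff P i = c i) \<and> (\<forall>k<Suc m. poly ((Tp ^^ k) P) 1 = pp k)"
        and A': "D P' (j + Suc m) \<and> (\<forall>i<j. coeff P' i = c i) \<and> (\<forall>k<Suc m. poly ((Tp ^^ k) P') 1 = pp k)"
        and e: "Tp P = Tp P'"
      have "poly P 1 = 0" "poly P' 1 = 0" using A A' iter_split[of m P pp] iter_split[of m P' pp] True by auto
      then show "P = P'" using Tp_0 e by metis
    next
      fix Q assume B: "D Q (j + m) \<and> (\<forall>i<j. coeff Q i = c' i) \<and> (\<forall>k<m. poly ((Tp ^^ k) Q) 1 = pp (Suc k))"
      define P where "P = [:1,1:] * Q"
      have TP: "Tp P = Q" unfolding P_def by (rule Tp_mult)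
      have p1: "poly P 1 = 0" unfolding P_def by simp
      have Qnz: "Q \<noteq> 0" using B D_nz by blast
      have dP: "degree P = Suc (j+m)" unfolding P_def using degree_11[OF Qnz] B unfolding D_def by simp
      have "coeff P (Suc (j+m)) = coeff Q (Suc (j+m)) + coeff Q (j+m)" unfolding P_def by simp
      also have "\<dots> = 1" using B unfolding D_def by (simp add: coeff_eq_0)
      finally have DP: "D P (j + Suc m)" unfolding D_def using dP by simp
      have cP: "\<forall>i<j. coeff P i = c i"
        using B cons0[of j Q c] unfolding P_def c'_def by metis
      have "\<forall>k<Suc m. poly ((Tp ^^ k) P) 1 = pp k"
        using iter_split[of m P pp] p1 True TP B by simp
      then show "\<exists>P. (D P (j + Suc m) \<and> (\<forall>i<j. coeff P i = c i) \<and> (\<forall>k<Suc m. poly ((Tp ^^ k) P) 1 = pp k)) \<and> Tp P = Q"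
        using DP cP TP by blast
    qed
  next
    case False
    define c' where "c' i = 1 + (\<Sum>l<i. c l)" for i
    note IH = Suc.IH[of "Suc j" c' "\<lambda>k. pp (Suc k)"]
    have jj: "Suc j + m = j + Suc m" by simp
    show ?thesis
    proof (rule ex1_transfer[OF _ _ _ IH, where h = Tp])
      fix P assume A: "D P (j + Suc m) \<and> (\<forall>i<j. coeff P i = c i) \<and> (\<forall>k<Suc m. poly ((Tp ^^ k) P) 1 = pp k)"
      then have "poly P 1 = pp 0 \<and> (\<forall>k<m. poly ((Tp^^k) (Tp P)) 1 = pp (Suc k))"
        using iter_split[of m P pp] by blast
      then have p1: "poly P 1 \<noteq> 0" and it0: "\<forall>k<m. poly ((Tp^^k) (Tp P)) 1 = pp (Suc k)"
        using False by auto
      obtain Q where Qd: "Q = Tp P" by blast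
      have it: "\<forall>k<m. poly ((Tp^^k) Q) 1 = pp (Suc k)" using it0 Qd by blast
      have PQ: "pCons 1 P = [:1,1:] * Q" using Tp_1[OF p1] Qd by blast
      have Pnz: "P \<noteq> 0" using A D_nz by blast
      have Qnz: "Q \<noteq> 0"
      proof
        assume "Q = 0" then have "pCons 1 P = 0" using PQ by simp
        then show False by simp
      qed
      have "degree (pCons 1 P) = Suc (degree P)" using Pnz by simp
      then have dQ: "degree Q = Suc j + m" using degree_11[OF Qnz] PQ A unfolding D_def by simp
      have "coeff (pCons 1 P) (Suc (Suc j + m)) = 1" using A unfolding D_def by simp
      then have "coeff Q (Suc (Suc j+m)) + coeff Q (Suc j+m) = 1"
        using PQ coeff_11_Suc[of Q "Suc j + m"] by simp
      then have "coeff Q (Suc j+m) = 1" using dQ by (simp add: coeff_eq_0)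
      then have DQ: "D Q (Suc j+m)" unfolding D_def using dQ by simp
      have "\<forall>i<j. coeff P i = c i" using A by blast
      then have "\<forall>i<Suc j. coeff Q i = c' i"
        using cons1[OF PQ[symmetric], of j c] unfolding c'_def by simp
      then show "D (Tp P) (Suc j + m) \<and> (\<forall>i<Suc j. coeff (Tp P) i = c' i) \<and> (\<forall>k<m. poly ((Tp ^^ k) (Tp P)) 1 = pp (Suc k))"
        using DQ it Qd by blast
    next
      fix P P' assume A: "D P (j + Suc m) \<and> (\<forall>i<j. coeff P i = c i) \<and> (\<forall>k<Suc m. poly ((Tp ^^ k) P) 1 = pp k)"
        and A': "D P' (j + Suc m) \<and> (\<forall>i<j. coeff P' i = c i) \<and> (\<forall>k<Suc m. poly ((Tp ^^ k) P') 1 = pp k)"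
        and e: "Tp P = Tp P'"
      have "poly P 1 \<noteq> 0" "poly P' 1 \<noteq> 0" using A A' iter_split[of m P pp] iter_split[of m P' pp] False by auto
      then have "pCons 1 P = pCons 1 P'" using Tp_1 e by metis
      then show "P = P'" by simp
    next
      fix Q assume B: "D Q (Suc j + m) \<and> (\<forall>i<Suc j. coeff Q i = c' i) \<and> (\<forall>k<m. poly ((Tp ^^ k) Q) 1 = pp (Suc k))"
      have q0: "coeff ([:1,1:]*Q) 0 = 1" using B unfolding c'_def by simp
      obtain a P where aP: "[:1,1:]*Q = pCons a P" by (rule pCons_cases)
      have "a = 1" using q0 aP by simp
      then have eq: "[:1,1:]*Q = pCons 1 P" using aP by simp
      have pc: "poly (pCons 1 P) 1 = 0" unfolding eq[symmetric] by simp
      have p1: "poly P 1 \<noteq> 0"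
      proof
        assume "poly P 1 = 0"
        then have "poly (pCons 1 P) 1 = 1" by simp
        then show False using pc by simp
      qed
      have "[:1,1:] * Tp P = [:1,1:] * Q" using Tp_1[OF p1] eq by simp
      then have TP: "Tp P = Q" by simp
      have Qnz: "Q \<noteq> 0" using B D_nz by blast
      have dd: "degree (pCons 1 P) = Suc (Suc j + m)" unfolding eq[symmetric] using degree_11[OF Qnz] B unfolding D_def by simp
      then have Pnz: "P \<noteq> 0" by (cases "P = 0") auto
      then have dP: "degree P = j + Suc m" using dd by simp
      have "coeff P (j + Suc m) = coeff (pCons 1 P) (Suc (Suc j + m))" by simp
      also have "\<dots> = coeff Q (Suc (Suc j + m)) + coeff Q (Suc j + m)" unfolding eq[symmetric] by simp
      also have "\<dots> = 1" using B unfolding D_def by (simp add: coeff_eq_0)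
      finally have DP: "D P (j + Suc m)" unfolding D_def using dP by simp
      have cP: "\<forall>i<j. coeff P i = c i"
        using B cons1[OF eq, of j c] unfolding c'_def by metis
      have "\<forall>k<Suc m. poly ((Tp ^^ k) P) 1 = pp k"
        using iter_split[of m P pp] p1 False TP B by simp
      then show "\<exists>P. (D P (j + Suc m) \<and> (\<forall>i<j. coeff P i = c i) \<and> (\<forall>k<Suc m. poly ((Tp ^^ k) P) 1 = pp k)) \<and> Tp P = Q"
        using DP cP TP by blast
    qed
  qed
qed


section \<open>Laurent series part\<close>

definition emb :: "bit poly \<Rightarrow> bit fls" where
  "emb P = Abs_fls (\<lambda>m. if m \<le> 0 then coeff P (nat (-m)) else 0)"

lemma emb_nth: "emb P $$ m = (if m \<le> 0 then coeff P (nat (-m)) else 0)"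
  unfolding emb_def
proof (rule nth_Abs_fls_lower_bound[of "- int (degree P)"], intro allI impI)
  fix n :: int assume "n < - int (degree P)"
  then have "degree P < nat (- n)" by linarith
  then show "(if n \<le> 0 then coeff P (nat (- n)) else 0) = 0" by (simp add: coeff_eq_0)
qed

lemma xvar_times_nth: "(xvar * f) $$ m = f $$ (m + 1)"
  unfolding xvar_def by (simp add: fls_X_inv_times_conv_shift)

lemma emb_add: "emb (P + Q) = emb P + emb Q"
  by (rule fls_eqI) (simp add: emb_nth)

lemma emb_pCons: "emb (pCons a P) = fls_const a + xvar * emb P"
proof (rule fls_eqI)
  fix m :: int
  show "emb (pCons a P) $$ m = (fls_const a + xvar * emb P) $$ m"
  proof (cases "m \<le> 0")
    case True
    show ?thesis
    proof (cases "m = 0")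
      case True then show ?thesis by (simp add: emb_nth xvar_times_nth)
    next
      case False
      then have "nat (-m) = Suc (nat (- (m+1)))" using \<open>m \<le> 0\<close> by simp
      then show ?thesis using True False by (simp add: emb_nth xvar_times_nth)
    qed
  next
    case False then show ?thesis by (simp add: emb_nth xvar_times_nth)
  qed
qed

lemma emb_11: "emb ([:1,1:] * Q) = (xvar + 1) * emb Q"
  unfolding mult11 emb_add emb_pCons by (simp add: algebra_simps)

lemma emb_pCons1: "emb (pCons 1 P) = 1 + xvar * emb P"
  unfolding emb_pCons by simp

definition polyp :: "bit fls \<Rightarrow> bit poly" where
  "polyp r = Poly (map (\<lambda>i. r $$ (- int i)) [0..<Suc (nat (deg2 r))])"

lemma coeff_polyp: "coeff (polyp r) i = r $$ (- int i)"
proof (cases "i < Suc (nat (deg2 r))")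
  case True then show ?thesis unfolding polyp_def
    by (simp add: nth_default_def del: upt_Suc)
next
  case False
  then have "- int i < fls_subdegree r" unfolding deg2_def by simp
  then show ?thesis using False unfolding polyp_def
    by (simp add: nth_default_def del: upt_Suc)
qed

lemma degree_polyp: "degree (polyp r) < Suc (nat (deg2 r))"
proof -
  have "degree (polyp r) \<le> nat (deg2 r)"
  proof (rule degree_le, intro allI impI)
    fix i assume "nat (deg2 r) < i"
    then have "- int i < fls_subdegree r" unfolding deg2_def by simp
    then show "coeff (polyp r) i = 0" by (simp add: coeff_polyp)
  qed
  then show ?thesis by simp
qed

lemma polyp_eq:
  assumes "\<forall>m\<le>0. f $$ m = 0"
  shows "polyp (emb Q + f) = Q"
  by (rule poly_eqI) (simp add: coeff_polyp emb_nth assms)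

lemma decomp: "r = emb (polyp r) + (r - emb (polyp r))" and
  decomp_frac: "\<forall>m\<le>0. (r - emb (polyp r)) $$ m = 0"
  by (auto simp: emb_nth coeff_polyp)

lemma poly_1_sum:
  fixes p :: "bit poly"
  assumes "degree p < N"
  shows "poly p 1 = (\<Sum>i<N. coeff p i)"
proof -
  have "poly p 1 = (\<Sum>i\<le>degree p. coeff p i)" by (simp add: poly_altdef)
  also have "\<dots> = (\<Sum>i<N. coeff p i)"
    by (rule sum.mono_neutral_left) (use assms in \<open>auto simp: coeff_eq_0\<close>)
  finally show ?thesis .
qed

lemma polypart_at1_eq: "polypart_at1 r = poly (polyp r) 1"
proof (cases "deg2 r < 0")
  case True
  then have "0 < fls_subdegree r" unfolding deg2_def by simp
  then have "r $$ 0 = 0" by simp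
  then show ?thesis using True unfolding polypart_at1_def
    by (simp add: poly_1_sum[OF degree_polyp] coeff_polyp)
next
  case False
  have im: "{0..deg2 r} = int ` {..<Suc (nat (deg2 r))}"
  proof
    show "{0..deg2 r} \<subseteq> int ` {..<Suc (nat (deg2 r))}"
    proof
      fix z assume "z \<in> {0..deg2 r}"
      then show "z \<in> int ` {..<Suc (nat (deg2 r))}"
        by (intro image_eqI[where x = "nat z"]) auto
    qed
  qed (use False in auto)
  have "polypart_at1 r = (\<Sum>z\<in>int ` {..<Suc (nat (deg2 r))}. r $$ (- z))"
    unfolding polypart_at1_def im ..
  also have "\<dots> = (\<Sum>i<Suc (nat (deg2 r)). r $$ (- int i))"
    by (subst sum.reindex) auto
  also have "\<dots> = poly (polyp r) 1"
    by (simp add: poly_1_sum[OF degree_polyp] coeff_polyp del: sum.lessThan_Suc)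
  finally show ?thesis .
qed

lemma vanish_mult:
  fixes f g :: "bit fls"
  assumes "\<forall>m<a. f $$ m = 0" "\<forall>m<b. g $$ m = 0" "m < a + b"
  shows "(f * g) $$ m = 0"
proof (cases "f = 0 \<or> g = 0")
  case True then show ?thesis by auto
next
  case False
  then have "a \<le> fls_subdegree f" "b \<le> fls_subdegree g"
    using assms fls_subdegree_geI by blast+
  then show ?thesis using assms(3) by (intro fls_times_nth_eq0) simp
qed

lemma u_nz: "xvar + 1 \<noteq> (0::bit fls)"
proof -
  have "(xvar + 1) $$ (-1) = (1::bit)" unfolding xvar_def by simp
  then show ?thesis by (metis fls_zero_nth one_neq_zero)
qed

lemma u_subdeg: "fls_subdegree (xvar + 1 :: bit fls) = -1"
  by (rule fls_subdegree_eqI) (auto simp: xvar_def)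

lemma g_vanish: "\<forall>m<1. (inverse (xvar + 1 :: bit fls)) $$ m = 0"
  using u_subdeg by simp

lemma Smap_polyp: "polyp (Smap r) = Tp (polyp r)"
proof -
  define P where "P = polyp r"
  define f where "f = r - emb P"
  define u :: "bit fls" where "u = xvar + 1"
  define g where "g = inverse u"
  have r: "r = emb P + f" unfolding f_def by simp
  have hf: "\<forall>m<1. f $$ m = 0" using decomp_frac[of r] unfolding f_def P_def by auto
  have hg: "\<forall>m<1. g $$ m = 0" unfolding g_def u_def using g_vanish .
  have unz: "u \<noteq> 0" unfolding u_def using u_nz .
  show ?thesis
  proof (cases "polypart_at1 r = 0")
    case True
    then have p0: "poly P 1 = 0" unfolding P_def polypart_at1_eq .
    define Q where "Q = Tp P"
    have "emb P = u * emb Q" using Tp_0[OF p0] emb_11 unfolding Q_def u_def by metis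
    then have "Smap r = emb Q + f * g"
      unfolding Smap_def using True unfolding r g_def
      by (simp add: unz field_simps u_def[symmetric])
    moreover have "\<forall>m\<le>0. (f * g) $$ m = 0"
      using vanish_mult[OF hf hg] by simp
    ultimately have "polyp (Smap r) = Q" using polyp_eq by simp
    then show ?thesis unfolding Q_def P_def .
  next
    case False
    then have p1: "poly P 1 \<noteq> 0" unfolding P_def polypart_at1_eq .
    define Q where "Q = Tp P"
    have "1 + xvar * emb P = u * emb Q" using Tp_1[OF p1] emb_11 emb_pCons1 unfolding Q_def u_def by metis
    then have "xvar * r = u * emb Q - 1 + xvar * f" unfolding r by (simp add: algebra_simps)
    then have "Smap r = emb Q + (xvar * f - 1) * g"
      unfolding Smap_def using False unfolding g_def
      by (simp add: unz field_simps u_def[symmetric])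
    moreover have "\<forall>m\<le>0. ((xvar * f - 1) * g) $$ m = 0"
    proof -
      have hx: "\<forall>m<0. (xvar * f - 1) $$ m = 0"
        using hf by (simp add: xvar_times_nth)
      show ?thesis using vanish_mult[OF hx hg] by simp
    qed
    ultimately have "polyp (Smap r) = Q" using polyp_eq by simp
    then show ?thesis unfolding Q_def P_def .
  qed
qed

lemma iter_polyp: "polyp ((Smap^^k) r) = (Tp^^k) (polyp r)"
  by (induction k) (simp_all add: Smap_polyp)

lemma pseq_eq: "pseq r k = poly ((Tp^^k) (polyp r)) 1"
  unfolding pseq_def polypart_at1_eq iter_polyp ..


section \<open>Measure part\<close>

lemma space_coin: "space coin_space = UNIV"
  unfolding coin_space_def space_PiM by (simp add: PiE_UNIV_domain)

lemma coin_set_eq: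
  fixes b :: "nat \<Rightarrow> bool"
  shows "{w \<in> space (PiM UNIV (\<lambda>_::nat. measure_pmf (pmf_of_set (UNIV :: bool set)))). \<forall>j<n. w j = b j} =
    prod_emb UNIV (\<lambda>_::nat. measure_pmf (pmf_of_set (UNIV :: bool set))) {..<n} (PiE {..<n} (\<lambda>j. {b j}))"
proof (rule set_eqI)
  fix w :: "nat \<Rightarrow> bool"
  have sp: "space (PiM UNIV (\<lambda>_::nat. measure_pmf (pmf_of_set (UNIV :: bool set)))) = UNIV"
    unfolding space_PiM by (simp add: PiE_UNIV_domain)
  show "w \<in> {w \<in> space (PiM UNIV (\<lambda>_::nat. measure_pmf (pmf_of_set (UNIV :: bool set)))). \<forall>j<n. w j = b j} \<longleftrightarrow>
    w \<in> prod_emb UNIV (\<lambda>_::nat. measure_pmf (pmf_of_set (UNIV :: bool set))) {..<n} (PiE {..<n} (\<lambda>j. {b j}))"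
    unfolding prod_emb_iff restrict_PiE_iff sp Ball_def lessThan_iff by simp
qed

lemma coin_emeasure:
  fixes b :: "nat \<Rightarrow> bool"
  shows "emeasure coin_space {w \<in> space coin_space. \<forall>j<n. w j = b j} =
     (\<Prod>j\<in>{..<n}. emeasure (measure_pmf (pmf_of_set (UNIV :: bool set))) {b j})"
  unfolding coin_space_def coin_set_eq
  by (rule emeasure_PiM_emb) (simp_all add: prob_space_measure_pmf)

lemma single_half: "emeasure (measure_pmf (pmf_of_set (UNIV :: bool set))) {x} = ennreal (1/2)"
  by (simp add: emeasure_pmf_single)

lemma coin_cyl:
  fixes b :: "nat \<Rightarrow> bool"
  shows "measure coin_space {w \<in> space coin_space. \<forall>j<n. w j = b j} = 1 / 2 ^ n"
proof -
  have "emeasure coin_space {w \<in> space coin_space. \<forall>j<n. w j = b j} = (\<Prod>j\<in>{..<n}. ennreal (1/2))"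
    unfolding coin_emeasure single_half ..
  also have "\<dots> = ennreal (\<Prod>j\<in>{..<n}. 1/2)"
    by (rule prod_ennreal) simp
  also have "\<dots> = ennreal ((1/2)^n)"
    by simp
  finally have e: "emeasure coin_space {w \<in> space coin_space. \<forall>j<n. w j = b j} = ennreal ((1/2)^n)" .
  show ?thesis unfolding measure_def e by (simp add: power_one_over)
qed

lemma coeff_polyp_series:
  "coeff (polyp (series_of n w)) i = (if i = n then 1 else if i < n then (if w (n - 1 - i) then 1 else 0) else 0)"
proof -
  have "coeff (polyp (series_of n w)) i
      = (if - int i + int n < 0 then 0 else (if nat (- int i + int n) = 0 then 1 else (if w (nat (- int i + int n) - 1) then 1 else 0)))"
    unfolding coeff_polyp series_of_def by simp
  also have "\<dots> = (if i = n then 1 else if i < n then (if w (n - 1 - i) then 1 else 0) else 0)"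
    by (cases "i < n"; cases "i = n") (auto simp: nat_diff_distrib)
  finally show ?thesis .
qed

lemma D_series: "D (polyp (series_of n w)) n"
proof -
  have "degree (polyp (series_of n w)) \<le> n"
    by (rule degree_le) (auto simp: coeff_polyp_series)
  moreover have "n \<le> degree (polyp (series_of n w))"
    by (rule le_degree) (simp add: coeff_polyp_series)
  ultimately show ?thesis unfolding D_def by (simp add: coeff_polyp_series)
qed

lemma bit_if_eq: "(if (x::bit) = 1 then 1 else 0) = x"
  by (cases x) simp_all

theorem lemma2p8:
  fixes n :: nat and pp :: "nat \<Rightarrow> bit"
  shows "measure coin_space
           {w \<in> space coin_space. \<forall>k<n. pseq (series_of n w) k = pp k} = 1 / 2 ^ n"
proof -
  obtain PS where PS: "D PS n" "\<forall>k<n. poly ((Tp^^k) PS) 1 = pp k"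
    and uniq: "\<And>P. D P n \<Longrightarrow> \<forall>k<n. poly ((Tp^^k) P) 1 = pp k \<Longrightarrow> P = PS"
    using main_unique[of 0 n undefined pp] by auto
  define b where "b j = (coeff PS (n - 1 - j) = 1)" for j
  have "{w \<in> space coin_space. \<forall>k<n. pseq (series_of n w) k = pp k}
      = {w \<in> space coin_space. \<forall>j<n. w j = b j}"
  proof (intro Collect_cong conj_cong refl)
    fix w :: "nat \<Rightarrow> bool"
    let ?P = "polyp (series_of n w)"
    have "(\<forall>k<n. pseq (series_of n w) k = pp k) \<longleftrightarrow> ?P = PS"
      using uniq[OF D_series[of n w]] PS unfolding pseq_eq by auto
    also have "\<dots> \<longleftrightarrow> (\<forall>j<n. w j = b j)"
    proof
      assume e: "?P = PS"
      show "\<forall>j<n. w j = b j"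
      proof (intro allI impI)
        fix j assume j: "j < n"
        have j1: "n - 1 - j < n" "n - 1 - (n - 1 - j) = j" "n - 1 - j \<noteq> n" using j by auto
        have "coeff ?P (n - 1 - j) = (if w j then 1 else 0)"
          unfolding coeff_polyp_series using j1 by simp
        then show "w j = b j" unfolding b_def e[symmetric] by auto
      qed
    next
      assume H: "\<forall>j<n. w j = b j"
      show "?P = PS"
      proof (rule poly_eqI)
        fix i
        show "coeff ?P i = coeff PS i"
        proof (cases "i < n")
          case True
          have i1: "n - 1 - i < n" "n - 1 - (n - 1 - i) = i" using True by auto
          have "w (n - 1 - i) = b (n - 1 - i)" using H i1(1) by blast
          then have "w (n - 1 - i) = (coeff PS i = 1)"
            unfolding b_def i1(2) .
          then show ?thesis using True by (simp add: coeff_polyp_series bit_if_eq)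
        next
          case False
          then show ?thesis using PS(1) unfolding D_def
            by (cases "i = n") (auto simp: coeff_polyp_series coeff_eq_0)
        qed
      qed
    qed
    finally show "(\<forall>k<n. pseq (series_of n w) k = pp k) = (\<forall>j<n. w j = b j)" .
  qed
  then show ?thesis using coin_cyl[of n b] by simp
qed

end
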